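(* In Ruleset C', let $G=\langle \mathrm{Nim}(i_1),\ldots,\mathrm{Nim}(i_\ell)\rangle_{C'}$ and $k=\max_{1\le j\le\ell} i_j$. Then, taking the first applicable case, \[G\equiv\begin{cases} 0 & \text{if } G=\langle\mathrm{Nim}(1),\mathrm{Nim}(2)\rangle_{C'} \text{ or } G=\langle\mathrm{Nim}(0),\mathrm{Nim}(1),\mathrm{Nim}(2)\rangle_{C'},\\ * & \text{if } k=1,\\ *(k-1) & \text{if } k-1\in\{i_1,\ldots,i_\ell\},\\ *k & \text{otherwise.}\end{cases}\] Equivalently: $G$ has value $*k$ unless $\mathrm{Nim}(k-1)$ belongs to the superposition, in which case it has value $*(k-1)$, with the only exceptions $\langle\mathrm{Nim}(0),\mathrm{Nim}(1)\rangle_{C'}\equiv *$ and $\langle\mathrm{Nim}(1),\mathrm{Nim}(2)\rangle_{C'}\equiv 0$ (and likewise $\langle\mathrm{Nim}(0),\mathrm{Nim}(1),\mathrm{Nim}(2)\rangle_{C'}\equiv 0$).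
   Context: Single-heap Nim: $\mathrm{Nim}(x)$ is a heap of $x$ tokens; classical move $(1,-j)$, $j\ge1$, removes $j$ tokens and is illegal if fewer than $j$ tokens remain. Quantum variation: a position is a nonempty finite set $\langle G_1,\ldots,G_n\rangle$ of distinct classical positions; a classical move is legal if legal in some $G_i$; a Q-move is a nonempty set of legal classical moves, leading to the superposition of all legal results of applying one of its moves to one of the $G_i$. Ruleset C' (subscript $C'$): Q-moves of at least two distinct classical moves are allowed; an unsuperposed (single) move is allowed if and only if it is legal in every $G_i$ in which the player still has at least one legal classical move. The player with no allowed Q-move loses. $\equiv$ is game equivalence, $*k$ the value of a classical Nim heap of $k$ tokens, $*=*1$, $*0=0$. *)

theory Defs
  imports Main
begin

text \<open>A quantum position is a nonempty finite set S of heap sizes (the superposed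
  classical positions Nim(x), x in S).  A classical move j (removing j tokens,
  j \<ge> 1) is legal in Nim(x) iff j \<le> x.\<close>

definition qpos :: "nat set \<Rightarrow> bool" where
  "qpos S \<longleftrightarrow> finite S \<and> S \<noteq> {}"

definition legal_move :: "nat set \<Rightarrow> nat \<Rightarrow> bool" where
  "legal_move S j \<longleftrightarrow> 1 \<le> j \<and> (\<exists>x\<in>S. j \<le> x)"

text \<open>Allowed Q-moves in Ruleset C': a nonempty set M of legal classical moves
  such that either M contains at least two distinct moves, or M = {j} and j is
  legal in every component in which the player has at least one legal move
  (i.e. every component with x \<ge> 1).\<close>
definition allowed_C' :: "nat set \<Rightarrow> nat set \<Rightarrow> bool" where
  "allowed_C' S M \<longleftrightarrow> M \<noteq> {} \<and> (\<forall>j\<in>M. legal_move S j) \<and>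
     (2 \<le> card M \<or> (\<exists>j. M = {j} \<and> (\<forall>x\<in>S. 1 \<le> x \<longrightarrow> j \<le> x)))"

definition qresult :: "nat set \<Rightarrow> nat set \<Rightarrow> nat set" where
  "qresult S M = {x - j | x j. x \<in> S \<and> j \<in> M \<and> j \<le> x}"

definition options_C' :: "nat set \<Rightarrow> nat set set" where
  "options_C' S = {qresult S M | M. allowed_C' S M}"

definition mex :: "nat set \<Rightarrow> nat" where
  "mex A = (LEAST n. n \<notin> A)"

text \<open>Grundy value computed to recursion depth b; every option T of S satisfies
  Max T < Max S, so depth Suc (Max S) suffices.\<close>
fun grundy_depth :: "nat \<Rightarrow> nat set \<Rightarrow> nat" where
  "grundy_depth 0 S = 0"
| "grundy_depth (Suc b) S = mex (grundy_depth b ` options_C' S)"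

definition grundy_C' :: "nat set \<Rightarrow> nat" where
  "grundy_C' S = grundy_depth (Suc (Max S)) S"

end

theory Submission
  imports Defs
begin

definition F :: "nat set \<Rightarrow> nat" where
  "F S = (if S = {1, 2} \<or> S = {0, 1, 2} then 0
     else if Max S = 1 then 1
     else if Max S - 1 \<in> S then Max S - 1
     else Max S)"

lemma qresult_mem: "y \<in> qresult S M \<longleftrightarrow> (\<exists>x j. y = x - j \<and> x \<in> S \<and> j \<in> M \<and> j \<le> x)"
  by (auto simp: qresult_def)

lemma qresult_lt:
  assumes "qpos S" "allowed_C' S M" "y \<in> qresult S M"
  shows "y < Max S"
proof -
  obtain x j where h: "y = x - j" "x \<in> S" "j \<in> M" "j \<le> x" using assms(3) by (auto simp: qresult_mem)
  have "1 \<le> j" using assms(2) h(3) by (auto simp: allowed_C'_def legal_move_def)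
  moreover have "x \<le> Max S" using assms(1) h(2) by (simp add: qpos_def)
  ultimately show ?thesis using h by linarith
qed

lemma qresult_ne:
  assumes "allowed_C' S M"
  shows "qresult S M \<noteq> {}"
proof -
  obtain j where "j \<in> M" using assms by (auto simp: allowed_C'_def)
  then obtain x where "x \<in> S" "j \<le> x" using assms by (auto simp: allowed_C'_def legal_move_def)
  then have "x - j \<in> qresult S M" using \<open>j \<in> M\<close> by (auto simp: qresult_mem)
  then show ?thesis by blast
qed

lemma option_props:
  assumes "qpos S" "T \<in> options_C' S"
  shows "qpos T \<and> Max T < Max S"
proof -
  obtain M where M: "allowed_C' S M" "T = qresult S M" using assms(2) by (auto simp: options_C'_def)
  have sub: "T \<subseteq> {..<Max S}" using qresult_lt[OF assms(1) M(1)] M(2) by auto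
  then have fin: "finite T" using finite_subset by blast
  have ne: "T \<noteq> {}" using qresult_ne[OF M(1)] M(2) by simp
  have "Max T \<in> T" using fin ne by simp
  then show ?thesis using sub fin ne by (auto simp: qpos_def)
qed

lemma depth:
  "qpos S \<Longrightarrow> Max S < b \<Longrightarrow> grundy_depth b S = mex (grundy_C' ` options_C' S)"
proof (induction "Max S" arbitrary: S b rule: less_induct)
  case less
  obtain b' where b: "b = Suc b'" using less.prems(2) by (cases b) auto
  have "grundy_depth b' T = grundy_C' T" if T: "T \<in> options_C' S" for T
  proof -
    have p: "qpos T" "Max T < Max S" using option_props[OF less.prems(1) T] by auto
    have e1: "grundy_depth b' T = mex (grundy_C' ` options_C' T)"
      by (rule less.hyps[OF p(2) p(1)]) (use p(2) less.prems(2) b in linarith)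
    have e2: "grundy_depth (Suc (Max T)) T = mex (grundy_C' ` options_C' T)"
      by (rule less.hyps[OF p(2) p(1)]) simp
    have e3: "grundy_C' T = grundy_depth (Suc (Max T)) T" by (simp only: grundy_C'_def)
    show ?thesis using e1 e2 e3 by simp
  qed
  then have "grundy_depth b' ` options_C' S = grundy_C' ` options_C' S" by (auto intro: image_cong)
  then show ?case using b by simp
qed

lemma grundy_rec: "qpos S \<Longrightarrow> grundy_C' S = mex (grundy_C' ` options_C' S)"
proof -
  assume a: "qpos S"
  have "grundy_C' S = grundy_depth (Suc (Max S)) S" by (rule grundy_C'_def)
  also have "\<dots> = mex (grundy_C' ` options_C' S)" using depth[OF a, of "Suc (Max S)"] by simp
  finally show ?thesis .
qed

lemma mex_eq: "v \<notin> A \<Longrightarrow> (\<forall>m<v. m \<in> A) \<Longrightarrow> mex A = v"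
  unfolding mex_def by (rule Least_equality) (auto simp: not_less[symmetric])

lemma F_le: "qpos T \<Longrightarrow> F T \<le> Max T"
  unfolding F_def by auto

lemma F_eq_Max: "qpos T \<Longrightarrow> F T = Max T \<Longrightarrow> 2 \<le> Max T \<Longrightarrow> Max T - 1 \<notin> T"
  unfolding F_def by (auto split: if_splits)

lemma F_with0:
  assumes "qpos T" "0 \<in> T"
  shows "F T = (if Max T = 2 \<and> 1 \<in> T then 0 else if Max T = 1 then 1
      else if Max T - 1 \<in> T then Max T - 1 else Max T)"
proof -
  have fin: "finite T" and ne: "T \<noteq> {}" using assms by (auto simp: qpos_def)
  have le: "\<forall>x\<in>T. x \<le> Max T" using fin by simp
  have mx: "Max T \<in> T" using fin ne by simp
  have "T = {0,1,2} \<longleftrightarrow> Max T = 2 \<and> 1 \<in> T"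
  proof
    assume "T = {0,1,2}" then show "Max T = 2 \<and> 1 \<in> T" by simp
  next
    assume a: "Max T = 2 \<and> 1 \<in> T"
    then have "\<forall>x\<in>T. x = 0 \<or> x = 1 \<or> x = 2" using le by force
    then show "T = {0,1,2}" using a mx assms(2) by auto
  qed
  moreover have "T \<noteq> {1,2}" using assms(2) by auto
  ultimately show ?thesis unfolding F_def by auto
qed

lemma opt_Tv:
  assumes "qpos S" "1 \<le> v" "v < Max S"
  shows "\<exists>T\<in>options_C' S. F T = (if v = 2 \<and> Max S - 1 \<in> S then 0 else if v = 1 then 1
      else if Max S - 1 \<in> S then v - 1 else v)"
proof -
  define k where "k = Max S"
  have fin: "finite S" and ne: "S \<noteq> {}" using assms by (auto simp: qpos_def)
  have kS: "k \<in> S" using fin ne k_def by simp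
  have le: "\<forall>x\<in>S. x \<le> k" using fin k_def by simp
  define M where "M = {k - v, k}"
  have leg: "\<And>j. j \<le> k \<Longrightarrow> \<exists>x\<in>S. j \<le> x" using kS by blast
  have cM: "card M = 2" using assms k_def M_def by auto
  have al: "allowed_C' S M" unfolding allowed_C'_def legal_move_def M_def
    using assms k_def kS cM M_def leg by auto
  define T where "T = qresult S M"
  have opt: "T \<in> options_C' S" using al T_def by (auto simp: options_C'_def)
  have qT: "qpos T" using option_props[OF assms(1) opt] by simp
  have z: "0 \<in> T" unfolding T_def qresult_mem M_def using kS by (intro exI[of _ k]) auto
  have vT: "v \<in> T" unfolding T_def qresult_mem M_def using kS assms k_def
    by (intro exI[of _ k] exI[of _ "k - v"]) auto
  have leT: "\<forall>y\<in>T. y \<le> v"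
  proof
    fix y assume "y \<in> T"
    then obtain x j where h: "y = x - j" "x \<in> S" "j \<in> M" "j \<le> x"
      unfolding T_def qresult_mem by blast
    have "x \<le> k" using h le by auto
    then show "y \<le> v" using h M_def by auto
  qed
  have mT: "Max T = v" using qT vT leT by (auto simp: qpos_def intro: Max_eqI)
  have vm1: "v - 1 \<in> T \<longleftrightarrow> v = 1 \<or> k - 1 \<in> S"
  proof
    assume "v - 1 \<in> T"
    then obtain x j where h: "v - 1 = x - j" "x \<in> S" "j \<in> M" "j \<le> x"
      unfolding T_def qresult_mem by blast
    show "v = 1 \<or> k - 1 \<in> S"
    proof (cases "j = k")
      case True then show ?thesis using h le assms k_def by force
    next
      case False then have "j = k - v" using h M_def by auto
      then have "x = k - 1" using h le assms k_def by force
      then show ?thesis using h by simp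
    qed
  next
    assume "v = 1 \<or> k - 1 \<in> S"
    then show "v - 1 \<in> T"
    proof
      assume "v = 1" then show ?thesis using z by simp
    next
      assume a: "k - 1 \<in> S"
      show ?thesis unfolding T_def qresult_mem M_def using a assms k_def
        by (intro exI[of _ "k - 1"] exI[of _ "k - v"]) auto
    qed
  qed
  have "F T = (if v = 2 \<and> k - 1 \<in> S then 0 else if v = 1 then 1
      else if k - 1 \<in> S then v - 1 else v)"
    using F_with0[OF qT z] mT vm1 by auto
  then show ?thesis using opt k_def by blast
qed

lemma opt_zero_small:
  assumes "qpos S" "1 \<le> Max S" "S \<subseteq> {0, Max S}"
  shows "{0} \<in> options_C' S"
proof -
  define k where "k = Max S"
  have fin: "finite S" and ne: "S \<noteq> {}" using assms by (auto simp: qpos_def)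
  have kS: "k \<in> S" using fin ne k_def by simp
  have al: "allowed_C' S {k}" unfolding allowed_C'_def legal_move_def
    using assms k_def kS by auto
  have S0: "\<forall>x\<in>S. x = 0 \<or> x = k" using assms(3) k_def by auto
  have S0': "\<forall>x\<in>S. k \<le> x \<longrightarrow> x = k" using S0 assms(2) k_def by auto
  have "qresult S {k} = {0}" using S0' kS by (auto simp: qresult_mem)
  then show ?thesis using al by (auto simp: options_C'_def k_def)
qed

lemma opt_zero_big:
  assumes "qpos S" "3 \<le> Max S" "Max S - 1 \<notin> S"
  shows "\<exists>T\<in>options_C' S. F T = 0"
proof -
  define k where "k = Max S"
  have fin: "finite S" and ne: "S \<noteq> {}" using assms by (auto simp: qpos_def)
  have kS: "k \<in> S" using fin ne k_def by simp
  have le: "\<forall>x\<in>S. x \<le> k" using fin k_def by simp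
  define M where "M = {k - 2, k - 1}"
  have leg: "\<And>j. j \<le> k \<Longrightarrow> \<exists>x\<in>S. j \<le> x" using kS by blast
  have cM: "card M = 2" using assms k_def M_def by auto
  have al: "allowed_C' S M" unfolding allowed_C'_def legal_move_def M_def
    using assms k_def kS cM M_def leg by auto
  define T where "T = qresult S M"
  have opt: "T \<in> options_C' S" using al T_def by (auto simp: options_C'_def)
  have 1: "1 \<in> T" unfolding T_def qresult_mem M_def using kS assms k_def
    by (intro exI[of _ k] exI[of _ "k - 1"]) auto
  have 2: "2 \<in> T" unfolding T_def qresult_mem M_def using kS assms k_def
    by (intro exI[of _ k] exI[of _ "k - 2"]) auto
  have sub: "\<forall>y\<in>T. y = 0 \<or> y = 1 \<or> y = 2"
  proof
    fix y assume "y \<in> T"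
    then obtain x j where h: "y = x - j" "x \<in> S" "j \<in> M" "j \<le> x"
      unfolding T_def qresult_mem by blast
    have "x \<le> k" "x \<noteq> k - 1" using h le assms k_def by auto
    then show "y = 0 \<or> y = 1 \<or> y = 2" using h M_def assms k_def by auto
  qed
  have "T = {1,2} \<or> T = {0,1,2}" using sub 1 2 by auto
  then have "F T = 0" unfolding F_def by auto
  then show ?thesis using opt by blast
qed

lemma main: "qpos S \<Longrightarrow> grundy_C' S = F S"
proof (induction "Max S" arbitrary: S rule: less_induct)
  case less
  have fin: "finite S" and ne: "S \<noteq> {}" using less.prems by (auto simp: qpos_def)
  define k where "k = Max S"
  have kS: "k \<in> S" using fin ne k_def by simp
  have le: "\<forall>x\<in>S. x \<le> k" using fin k_def by simp
  have "grundy_C' ` options_C' S = F ` options_C' S"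
  proof (rule image_cong[OF refl])
    fix T assume "T \<in> options_C' S"
    then show "grundy_C' T = F T" using option_props[OF less.prems] less.hyps by auto
  qed
  then have g: "grundy_C' S = mex (F ` options_C' S)" using grundy_rec[OF less.prems] by simp
  have opts: "qpos T \<and> Max T < k" if "T \<in> options_C' S" for T
    using option_props[OF less.prems that] k_def by simp
  have goal: "F S \<notin> F ` options_C' S \<and> (\<forall>m<F S. m \<in> F ` options_C' S)"
  proof (cases "S = {1, 2} \<or> S = {0, 1, 2}")
    case E: True
    then have FS: "F S = 0" unfolding F_def by simp
    have "F T \<noteq> 0" if T: "T \<in> options_C' S" for T
    proof
      assume F0: "F T = 0"
      have S3: "S \<subseteq> {0,1,2}" "1 \<in> S" "2 \<in> S" using E by auto
      have kk: "k = 2" using E k_def by auto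
      have qT: "qpos T" and mt: "Max T < 2" using opts[OF T] kk by auto
      have "Max T \<noteq> 1"
      proof
        assume a: "Max T = 1"
        then have "T \<noteq> {1,2} \<and> T \<noteq> {0,1,2}" by auto
        then show False using F0 a unfolding F_def by simp
      qed
      then have m0: "Max T = 0" using mt by linarith
      obtain M where M: "allowed_C' S M" "T = qresult S M" using T by (auto simp: options_C'_def)
      have "1 \<notin> T" using qT m0 Max_ge[of T 1] by (auto simp: qpos_def)
      have n1: "1 \<notin> M"
      proof
        assume "1 \<in> M"
        then have "2 - 1 \<in> qresult S M" unfolding qresult_mem using S3
          by (intro exI[of _ 2] exI[of _ 1]) simp
        then show False using \<open>1 \<notin> T\<close> M(2) by simp
      qed
      have "j = 2" if j: "j \<in> M" for j
      proof -
        have "1 \<le> j" "\<exists>x\<in>S. j \<le> x" using M(1) j unfolding allowed_C'_def legal_move_def by auto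
        then obtain x where "x \<in> S" "j \<le> x" "1 \<le> j" by blast
        then have "x \<le> 2" using S3 by auto
        then show "j = 2" using \<open>j \<le> x\<close> \<open>1 \<le> j\<close> n1 j by (cases "j = 1") auto
      qed
      then have "M = {2}" using M(1) unfolding allowed_C'_def by auto
      then have "\<forall>x\<in>S. 1 \<le> x \<longrightarrow> 2 \<le> x" using M(1) unfolding allowed_C'_def by auto
      then show False using S3 by auto
    qed
    then have "0 \<notin> F ` options_C' S" by (metis imageE)
    then show ?thesis using FS by simp
  next
    case nE: False
    show ?thesis
    proof (cases "k = 0")
      case True
      then have "F S = 0" using nE kS k_def unfolding F_def by auto
      moreover have "options_C' S = {}" using opts True by auto
      ultimately show ?thesis by simp
    next
      case k0: False
      show ?thesis
      proof (cases "k = 1")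
        case True
        then have FS: "F S = 1" using nE k_def unfolding F_def by auto
        have "S \<subseteq> {0, Max S}" using le True k_def by auto
        then have "{0} \<in> options_C' S" using opt_zero_small[OF less.prems] True k_def by auto
        moreover have "F {0} = 0" unfolding F_def by simp
        ultimately have "0 \<in> F ` options_C' S" by (metis image_eqI)
        moreover have "F T \<noteq> 1" if T: "T \<in> options_C' S" for T
        proof -
          have a: "qpos T" "Max T < k" using opts[OF T] by auto
          show ?thesis using F_le[OF a(1)] a(2) True by linarith
        qed
        then have "1 \<notin> F ` options_C' S" by (metis imageE)
        ultimately show ?thesis using FS by auto
      next
        case k1: False
        show ?thesis
        proof (cases "k - 1 \<in> S")
          case A: True
          have k3: "3 \<le> k"
          proof (rule ccontr)
            assume "\<not> 3 \<le> k"
            then have "k = 2" using k0 k1 by auto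
            then have "S \<subseteq> {0,1,2}" "1 \<in> S" "2 \<in> S" using le A kS by auto
            then have "S = {1,2} \<or> S = {0,1,2}" by auto
            then show False using nE by simp
          qed
          have FS: "F S = k - 1" using nE k1 A k_def unfolding F_def by auto
          have notin: "F T \<noteq> k - 1" if T: "T \<in> options_C' S" for T
          proof
            assume FT: "F T = k - 1"
            have qT: "qpos T" and mt: "Max T < k" using opts[OF T] by auto
            have mT: "Max T = k - 1" using F_le[OF qT] FT mt by auto
            have n: "(k - 1) - 1 \<notin> T" using F_eq_Max[OF qT] FT k3 mT by simp
            have "k - 1 \<in> T" using qT mT by (metis Max_in qpos_def)
            obtain M where M: "allowed_C' S M" "T = qresult S M" using T by (auto simp: options_C'_def)
            obtain x j where h: "k - 1 = x - j" "x \<in> S" "j \<in> M" "j \<le> x"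
              using \<open>k - 1 \<in> T\<close> M(2) qresult_mem[of "k - 1" S M] by blast
            have "1 \<le> j" using M(1) h(3) by (auto simp: allowed_C'_def legal_move_def)
            moreover have "x \<le> k" using h le by auto
            ultimately have "j = 1" using h(1,4) k3 by linarith
            then have "(k - 1) - 1 \<in> qresult S M" using A h k3 unfolding qresult_mem
              by (intro exI[of _ "k - 1"] exI[of _ 1]) auto
            then have "(k - 1) - 1 \<in> T" using M(2) by simp
            then show False using n by simp
          qed
          have "m \<in> F ` options_C' S" if m: "m < k - 1" for m
          proof -
            consider "m = 0" | "m = 1" | "2 \<le> m" by linarith
            then show ?thesis
            proof cases
              case 1
              obtain T where "T \<in> options_C' S" "F T = 0" using opt_Tv[OF less.prems, of 2] k3 A k_def by auto
              then show ?thesis using 1 by (metis image_eqI)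
            next
              case 2
              obtain T where "T \<in> options_C' S" "F T = 1" using opt_Tv[OF less.prems, of 1] k3 A k_def by auto
              then show ?thesis using 2 by (metis image_eqI)
            next
              case 3
              have mk: "m + 1 < Max S" using m k_def by linarith
              have "\<exists>T\<in>options_C' S. F T = m" using opt_Tv[OF less.prems _ mk] A k_def 3 by simp
              then obtain T where "T \<in> options_C' S" "F T = m" by blast
              then show ?thesis by (metis image_eqI)
            qed
          qed
          moreover have "F S \<notin> F ` options_C' S" using notin FS by (metis imageE)
          ultimately show ?thesis using FS by auto
        next
          case B: False
          have FS: "F S = k" using nE k1 B k_def unfolding F_def by auto
          have notin: "F T \<noteq> k" if T: "T \<in> options_C' S" for T
          proof -
            have a: "qpos T" "Max T < k" using opts[OF T] by auto
            show ?thesis using F_le[OF a(1)] a(2) by linarith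
          qed
          have "m \<in> F ` options_C' S" if m: "m < k" for m
          proof (cases "m = 0")
            case True
            show ?thesis
            proof (cases "k = 2")
              case True
              have "S \<subseteq> {0, Max S}"
              proof
                fix x assume x: "x \<in> S"
                then have "x \<le> 2" "x \<noteq> 1" using le B True by auto
                then have "x = 0 \<or> x = 2" by linarith
                then show "x \<in> {0, Max S}" using True k_def by auto
              qed
              then have "{0} \<in> options_C' S" using opt_zero_small[OF less.prems] True k_def by auto
              moreover have "F {0} = 0" unfolding F_def by simp
              ultimately show ?thesis using \<open>m = 0\<close> by (metis image_eqI)
            next
              case False
              then obtain T where "T \<in> options_C' S" "F T = 0"
                using opt_zero_big[OF less.prems] k0 k1 B k_def by auto
              then show ?thesis using \<open>m = 0\<close> by (metis image_eqI)
            qed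
          next
            case False
            obtain T where "T \<in> options_C' S" "F T = m"
              using opt_Tv[OF less.prems, of m] False B k_def m by auto
            then show ?thesis by (metis image_eqI)
          qed
          moreover have "F S \<notin> F ` options_C' S" using notin FS by (metis imageE)
          ultimately show ?thesis using FS by auto
        qed
      qed
    qed
  qed
  then show ?case using g mex_eq by auto
qed

theorem lemma5:
  fixes S :: "nat set"
  assumes "qpos S"
  defines "k \<equiv> Max S"
  shows "grundy_C' S =
    (if S = {1, 2} \<or> S = {0, 1, 2} then 0
     else if k = 1 then 1
     else if k - 1 \<in> S then k - 1
     else k)"
  using main[OF assms(1)] unfolding F_def k_def .

end
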